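(* Let $K$ be a totally real field, $L/K$ a CM extension with CM type $\Phi$, and $M$ a regular, polarized, special realization over $K$ with coefficients in a number field $E$, of rank $n$ and pure of weight $w(M)$, with Hodge numbers $p_1(\sigma,\varphi)>\dots>p_n(\sigma,\varphi)$ for $\sigma\in J_K,\varphi\in J_E$. Fix $\varphi\in J_E$ and $r\in\{0,\dots,n\}$. If $r>0$, set $a_\tau^{(r,\varphi)}=w(M)-2p_r(\tau|_K,\varphi)+1$ for $\tau\in\Phi$; if $r=0$, set $a_\tau^{(0,\varphi)}=a^{(0)}$ for all $\tau\in\Phi$, where $a^{(0)}$ is a fixed integer with $a^{(0)}<\min\{w(M)-2p_1(\sigma,\psi)\}_{\sigma\in J_K,\psi\in J_E}$ and $a^{(0)}\equiv w(M)+1\pmod 2$. Let $\chi^{(r,\varphi)}$ be an algebraic Hecke character of $L$ of infinity type $(n_\tau^{(r,\varphi)})_{\tau\in J_L}$ with $n_\tau^{(r,\varphi)}-n_{\bar\tau}^{(r,\varphi)}=a_\tau^{(r,\varphi)}$ for all $\tau\in\Phi$. Then: (i) $\chi^{(r,\varphi)}$ is critical, except possibly when $n$ is even and $r=n/2$; in that case $\chi^{(n/2,\varphi)}$ is critical if and only if $p_{n/2}(\sigma,\varphi)\neq p_{n/2+1}(\sigma,\varphi)+1$ for every $\sigma\in J_K$. (ii) $n_\tau^{(r,\varphi)}>n_{\bar\tau}^{(r,\varphi)}$ for one (equivalently every) $\tau\in\Phi$ if and only if $r\in\{\lfloor n/2\rfloor+1,\dots,n\}$.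
   Context: $J_F=\operatorname{Hom}(F,\mathbb C)$; $\bar\tau=c\circ\tau$; a CM type $\Phi\subset J_L$ satisfies $J_L=\Phi\sqcup\bar\Phi$. A realization $M$ over $K$ with coefficients in $E$ (in Deligne's sense of realizations of motives for absolute Hodge cycles) has, for each $\sigma\in J_K$, a Betti realization $M_\sigma$ (an $E$-vector space of dimension $n$ with a Frobenius involution $F_\sigma$) and a Hodge decomposition $M_\sigma\otimes_{E,\varphi}\mathbb C=\bigoplus_{p+q=w(M)}M_\sigma^{pq}(\varphi)$ for $\varphi\in J_E$. $M$ is regular if all $M_\sigma^{pq}(\varphi)$ have dimension at most 1; then $p_1(\sigma,\varphi)>\dots>p_n(\sigma,\varphi)$ are the $p$ with $M_\sigma^{pq}(\varphi)\ne0$, and $p_i(\sigma,\varphi)+p_{n+1-i}(\sigma,\varphi)=w(M)$. $M$ is polarized if there is a nondegenerate morphism $M\otimes_E M\to E(-w(M))$, symmetric if $w(M)$ is even and alternating if odd; $M$ is special if each $F_\sigma$ acts on $M_\sigma^{w(M)/2,w(M)/2}$ by a scalar $\pm1$ independent of $\sigma$. An algebraic Hecke character $\chi$ of $L$ has infinity type $(n_\tau)_{\tau\in J_L}$ meaning $\chi(x)=\tau(x)^{-n_\tau}\bar\tau(x)^{-n_{\bar\tau}}$ on the identity component at the archimedean place of $\tau$; $\chi$ is critical if $n_\tau\ne n_{\bar\tau}$ for all $\tau\in J_L$. *)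

theory Defs
  imports Main
begin

text \<open>Embeddings: J_L is modelled by a finite type 'l, J_K by a finite type 'k,
  J_E by a finite type 'e.  res is restriction J_L -> J_K, cc is tau |-> bar tau.\<close>

definition cm_extension :: "('l \<Rightarrow> 'k) \<Rightarrow> ('l \<Rightarrow> 'l) \<Rightarrow> bool" where
  "cm_extension res cc \<longleftrightarrow>
     (\<forall>\<tau>. cc (cc \<tau>) = \<tau> \<and> cc \<tau> \<noteq> \<tau> \<and> res (cc \<tau>) = res \<tau>) \<and>
     surj res \<and>
     (\<forall>\<tau> \<tau>'. res \<tau>' = res \<tau> \<longrightarrow> \<tau>' = \<tau> \<or> \<tau>' = cc \<tau>)"

definition is_cm_type :: "('l \<Rightarrow> 'l) \<Rightarrow> 'l set \<Rightarrow> bool" where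
  "is_cm_type cc \<Phi> \<longleftrightarrow> \<Phi> \<inter> cc ` \<Phi> = {} \<and> \<Phi> \<union> cc ` \<Phi> = UNIV"

text \<open>Hodge data of a realization of rank n: hdim sigma phi p = dim M_sigma^{p,w-p}(phi).\<close>

definition hodge_data :: "('k \<Rightarrow> 'e \<Rightarrow> int \<Rightarrow> nat) \<Rightarrow> nat \<Rightarrow> bool" where
  "hodge_data hdim n \<longleftrightarrow> (\<forall>\<sigma> \<phi>. finite {p. hdim \<sigma> \<phi> p \<noteq> 0} \<and>
       (\<Sum>p\<in>{p. hdim \<sigma> \<phi> p \<noteq> 0}. hdim \<sigma> \<phi> p) = n)"

definition regular :: "('k \<Rightarrow> 'e \<Rightarrow> int \<Rightarrow> nat) \<Rightarrow> bool" where
  "regular hdim \<longleftrightarrow> (\<forall>\<sigma> \<phi> p. hdim \<sigma> \<phi> p \<le> 1)"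

definition hodge_p :: "('k \<Rightarrow> 'e \<Rightarrow> int \<Rightarrow> nat) \<Rightarrow> 'k \<Rightarrow> 'e \<Rightarrow> nat \<Rightarrow> int" where
  "hodge_p hdim \<sigma> \<phi> i = rev (sorted_list_of_set {p. hdim \<sigma> \<phi> p \<noteq> 0}) ! (i - 1)"

definition critical :: "('l \<Rightarrow> 'l) \<Rightarrow> ('l \<Rightarrow> int) \<Rightarrow> bool" where
  "critical cc ninf \<longleftrightarrow> (\<forall>\<tau>. ninf \<tau> \<noteq> ninf (cc \<tau>))"

end

theory Submission
  imports Defs
begin

lemma hodge_dec:
  assumes hd: "hodge_data hdim n" and reg: "regular hdim"
    and ij: "1 \<le> i" "i < j" "j \<le> n"
  shows "hodge_p hdim \<sigma> \<psi> j < hodge_p hdim \<sigma> \<psi> i"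
proof -
  define S where "S = {p. hdim \<sigma> \<psi> p \<noteq> 0}"
  have fin: "finite S" and sm: "(\<Sum>p\<in>S. hdim \<sigma> \<psi> p) = n"
    using hd unfolding hodge_data_def S_def by auto
  have "(\<Sum>p\<in>S. hdim \<sigma> \<psi> p) = (\<Sum>p\<in>S. 1)"
  proof (rule sum.cong)
    fix x assume "x \<in> S"
    hence "hdim \<sigma> \<psi> x \<noteq> 0" unfolding S_def by simp
    moreover have "hdim \<sigma> \<psi> x \<le> 1" using reg unfolding regular_def by blast
    ultimately show "hdim \<sigma> \<psi> x = 1" by linarith
  qed simp
  hence cS: "card S = n" using sm by simp
  define xs where "xs = rev (sorted_list_of_set S)"
  have len: "length xs = n" using cS fin by (simp add: xs_def)
  have ss: "sorted_wrt (<) (sorted_list_of_set S)" by (rule strict_sorted_list_of_set)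
  have "sorted_wrt (>) xs" unfolding xs_def sorted_wrt_rev using ss by simp
  hence "xs ! (i - 1) > xs ! (j - 1)"
    using ij len sorted_wrt_nth_less[of "(>)" xs "i - 1" "j - 1"] by simp
  thus ?thesis unfolding hodge_p_def xs_def S_def by simp
qed

lemma key:
  assumes hd: "hodge_data hdim n" and reg: "regular hdim"
    and sym: "\<forall>\<sigma> \<psi> i. 1 \<le> i \<and> i \<le> n \<longrightarrow>
                hodge_p hdim \<sigma> \<psi> i + hodge_p hdim \<sigma> \<psi> (n + 1 - i) = w"
    and r: "1 \<le> r" "r \<le> n"
  shows "(w - 2 * hodge_p hdim \<sigma> \<phi> r + 1 = 0 \<longleftrightarrow>
           (even n \<and> r = n div 2 \<and> hodge_p hdim \<sigma> \<phi> (n div 2) = hodge_p hdim \<sigma> \<phi> (n div 2 + 1) + 1))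
       \<and> (w - 2 * hodge_p hdim \<sigma> \<phi> r + 1 > 0 \<longleftrightarrow> r \<ge> n div 2 + 1)"
proof -
  let ?p = "hodge_p hdim \<sigma> \<phi>"
  define q where "q = n + 1 - r"
  have q: "1 \<le> q" "q \<le> n" using r by (auto simp: q_def)
  have s: "?p r + ?p q = w" unfolding q_def using sym r by blast
  have dec: "\<And>i j. 1 \<le> i \<Longrightarrow> i < j \<Longrightarrow> j \<le> n \<Longrightarrow> ?p j < ?p i"
    using hodge_dec[OF hd reg] by blast
  consider "r = q" | "r < q" "q = r + 1" | "r + 1 < q" | "q < r" by linarith
  thus ?thesis
  proof cases
    case 1
    hence "odd n" "r \<ge> n div 2 + 1" using q_def r by presburger+
    thus ?thesis using s 1 by auto
  next
    case 2
    hence e: "even n" "r = n div 2" "\<not> r \<ge> n div 2 + 1" using q_def r by presburger+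
    have "?p q < ?p r" using dec[of r q] 2 q r by simp
    thus ?thesis using s e 2 by auto
  next
    case 3
    have "?p (r+1) < ?p r" "?p q < ?p (r+1)" using dec[of r "r+1"] dec[of "r+1" q] 3 q r by auto
    moreover have "\<not> r \<ge> n div 2 + 1" "\<not> (even n \<and> r = n div 2)" using 3 q_def r by presburger+
    ultimately show ?thesis using s by auto
  next
    case 4
    have "?p r < ?p q" using dec[of q r] 4 q r by simp
    moreover have "r \<ge> n div 2 + 1" "\<not> r = n div 2" using 4 q_def r by auto
    ultimately show ?thesis using s by auto
  qed
qed

theorem lemma2p4:
  fixes res :: "'l::finite \<Rightarrow> 'k::finite"
    and cc :: "'l \<Rightarrow> 'l"
    and \<Phi> :: "'l set"
    and hdim :: "'k \<Rightarrow> 'e::finite \<Rightarrow> int \<Rightarrow> nat"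
    and n :: nat and w :: int
    and \<phi> :: 'e and r :: nat and a0 :: int
    and a :: "'l \<Rightarrow> int" and ninf :: "'l \<Rightarrow> int"
  assumes cm: "cm_extension res cc"
    and cmtype: "is_cm_type cc \<Phi>"
    and hodge: "hodge_data hdim n"
    and n_pos: "n \<ge> 1"
    and reg: "regular hdim"
    and sym: "\<forall>\<sigma> \<psi> i. 1 \<le> i \<and> i \<le> n \<longrightarrow>
                hodge_p hdim \<sigma> \<psi> i + hodge_p hdim \<sigma> \<psi> (n + 1 - i) = w"
    and r_le: "r \<le> n"
    and a0_lt: "a0 < Min {w - 2 * hodge_p hdim \<sigma> \<psi> 1 | \<sigma> \<psi>. True}"
    and a0_par: "a0 mod 2 = (w + 1) mod 2"
    and a_def: "\<forall>\<tau>\<in>\<Phi>. a \<tau> = (if r > 0 then w - 2 * hodge_p hdim (res \<tau>) \<phi> r + 1 else a0)"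
    and inf_type: "\<forall>\<tau>\<in>\<Phi>. ninf \<tau> - ninf (cc \<tau>) = a \<tau>"
  shows "(\<not> (even n \<and> r = n div 2) \<longrightarrow> critical cc ninf)
       \<and> (even n \<and> r = n div 2 \<longrightarrow>
            (critical cc ninf \<longleftrightarrow>
              (\<forall>\<sigma>. hodge_p hdim \<sigma> \<phi> (n div 2) \<noteq> hodge_p hdim \<sigma> \<phi> (n div 2 + 1) + 1)))
       \<and> ((\<exists>\<tau>\<in>\<Phi>. ninf \<tau> > ninf (cc \<tau>)) \<longleftrightarrow> r \<in> {n div 2 + 1..n})
       \<and> ((\<forall>\<tau>\<in>\<Phi>. ninf \<tau> > ninf (cc \<tau>)) \<longleftrightarrow> r \<in> {n div 2 + 1..n})"
proof -
  let ?Z = "\<lambda>\<sigma>. even n \<and> r = n div 2 \<and> hodge_p hdim \<sigma> \<phi> (n div 2) = hodge_p hdim \<sigma> \<phi> (n div 2 + 1) + 1"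
  have a0neg: "a0 < 0"
  proof -
    let ?A = "{w - 2 * hodge_p hdim \<sigma> \<psi> 1 | \<sigma> \<psi>. True}"
    have "?A = (\<lambda>(\<sigma>,\<psi>). w - 2 * hodge_p hdim \<sigma> \<psi> 1) ` UNIV" by auto
    hence fA: "finite ?A" by simp
    fix s :: 'k and ps :: 'e
    have "w - 2 * hodge_p hdim s ps 1 \<in> ?A" by blast
    hence "Min ?A \<le> w - 2 * hodge_p hdim s ps 1" using fA by simp
    moreover have "hodge_p hdim s ps 1 + hodge_p hdim s ps n = w" using sym n_pos by (metis add_diff_cancel_right' le_refl)
    moreover have "hodge_p hdim s ps n \<le> hodge_p hdim s ps 1"
      using hodge_dec[OF hodge reg, of 1 n s ps] using n_pos by (cases "n = 1") auto
    ultimately show ?thesis using a0_lt by linarith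
  qed
  have K: "\<And>\<tau>. \<tau> \<in> \<Phi> \<Longrightarrow> (a \<tau> = 0 \<longleftrightarrow> ?Z (res \<tau>)) \<and> (a \<tau> > 0 \<longleftrightarrow> r \<in> {n div 2 + 1..n})"
  proof -
    fix \<tau> assume t: "\<tau> \<in> \<Phi>"
    show "(a \<tau> = 0 \<longleftrightarrow> ?Z (res \<tau>)) \<and> (a \<tau> > 0 \<longleftrightarrow> r \<in> {n div 2 + 1..n})"
    proof (cases "r = 0")
      case True
      hence "\<not> ?Z (res \<tau>)" using n_pos by auto
      thus ?thesis using True a0neg a_def t by auto
    next
      case False
      thus ?thesis using key[OF hodge reg sym, of r "res \<tau>" \<phi>] r_le a_def t by auto
    qed
  qed
  have cov: "\<And>\<tau>. \<tau> \<in> \<Phi> \<or> (\<exists>t\<in>\<Phi>. \<tau> = cc t)" using cmtype unfolding is_cm_type_def by blast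
  have ccinv: "\<And>t. cc (cc t) = t" and rescc: "\<And>t. res (cc t) = res t" and sj: "surj res"
    using cm unfolding cm_extension_def by auto
  have crit: "critical cc ninf \<longleftrightarrow> (\<forall>\<tau>\<in>\<Phi>. a \<tau> \<noteq> 0)"
    unfolding critical_def
  proof
    assume "\<forall>\<tau>. ninf \<tau> \<noteq> ninf (cc \<tau>)" thus "\<forall>\<tau>\<in>\<Phi>. a \<tau> \<noteq> 0" using inf_type by auto
  next
    assume A: "\<forall>\<tau>\<in>\<Phi>. a \<tau> \<noteq> 0"
    show "\<forall>\<tau>. ninf \<tau> \<noteq> ninf (cc \<tau>)"
    proof
      fix \<tau> show "ninf \<tau> \<noteq> ninf (cc \<tau>)"
      proof (cases "\<tau> \<in> \<Phi>")
        case True thus ?thesis using A inf_type by auto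
      next
        case False
        then obtain t where t: "t \<in> \<Phi>" "\<tau> = cc t" using cov by blast
        hence "ninf t \<noteq> ninf (cc t)" using A inf_type by auto
        thus ?thesis using t ccinv by auto
      qed
    qed
  qed
  have allsig: "(\<forall>\<tau>\<in>\<Phi>. \<not> ?Z (res \<tau>)) \<longleftrightarrow> (\<forall>\<sigma>. \<not> ?Z \<sigma>)"
  proof
    assume A: "\<forall>\<tau>\<in>\<Phi>. \<not> ?Z (res \<tau>)"
    show "\<forall>\<sigma>. \<not> ?Z \<sigma>"
    proof
      fix \<sigma> obtain \<tau> where "\<sigma> = res \<tau>" using sj by (metis surj_def)
      show "\<not> ?Z \<sigma>"
      proof (cases "\<tau> \<in> \<Phi>")
        case True thus ?thesis using A \<open>\<sigma> = res \<tau>\<close> by blast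
      next
        case False
        then obtain t where t: "t \<in> \<Phi>" "\<tau> = cc t" using cov by blast
        thus ?thesis using A \<open>\<sigma> = res \<tau>\<close> rescc by metis
      qed
    qed
  qed auto
  have gt: "\<And>\<tau>. \<tau> \<in> \<Phi> \<Longrightarrow> (ninf \<tau> > ninf (cc \<tau>) \<longleftrightarrow> r \<in> {n div 2 + 1..n})"
  proof -
    fix \<tau> assume t: "\<tau> \<in> \<Phi>"
    have "ninf \<tau> > ninf (cc \<tau>) \<longleftrightarrow> a \<tau> > 0" using inf_type t by force
    thus "ninf \<tau> > ninf (cc \<tau>) \<longleftrightarrow> r \<in> {n div 2 + 1..n}" using K[OF t] by blast
  qed
  have ne: "\<Phi> \<noteq> {}" using cov by blast
  show ?thesis
  proof (intro conjI impI)
    assume "\<not> (even n \<and> r = n div 2)"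
    thus "critical cc ninf" using crit K by auto
  next
    assume "even n \<and> r = n div 2"
    thus "critical cc ninf \<longleftrightarrow>
              (\<forall>\<sigma>. hodge_p hdim \<sigma> \<phi> (n div 2) \<noteq> hodge_p hdim \<sigma> \<phi> (n div 2 + 1) + 1)"
      using crit K allsig by auto
  next
    show "(\<exists>\<tau>\<in>\<Phi>. ninf \<tau> > ninf (cc \<tau>)) \<longleftrightarrow> r \<in> {n div 2 + 1..n}"
      using gt ne by blast
  next
    show "(\<forall>\<tau>\<in>\<Phi>. ninf \<tau> > ninf (cc \<tau>)) \<longleftrightarrow> r \<in> {n div 2 + 1..n}"
      using gt ne by blast
  qed
qed

end
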